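(* Let $n$ be even, $e_1,\dots,e_n$ the standard basis of $\mathbb{R}^n$ and $e_0=e_1+\dots+e_n$. Consider the complete flags $F_0=F(e_0,e_1,\dots,e_{n-1})$, $F_1=F(e_1,e_2,\dots,e_n)$ and $F_i=F(e_i,e_{i+1},\dots,e_n,e_0,\dots,e_{i-1})$ for $2\le i\le n$. If $b:(\mathcal{F}(\mathbb{R}^n))^n\to\mathbb{R}$ is any map satisfying $b(gF'_1,\dots,gF'_n)=\operatorname{sign}(\det g)\,b(F'_1,\dots,F'_n)$ for all $g\in\mathrm{GL}_n(\mathbb{Z})$ and all flags, then $db(F_0,\dots,F_n)=0$.
   Context: $\mathcal{F}(\mathbb{R}^n)$ is the set of complete flags in $\mathbb{R}^n$. For a basis $(w_1,\dots,w_n)$, $F(w_1,\dots,w_n)$ denotes the flag $\{0\}\subset\langle w_1\rangle\subset\langle w_1,w_2\rangle\subset\dots\subset\langle w_1,\dots,w_n\rangle=\mathbb{R}^n$. The coboundary is $db(F_0,\dots,F_n)=\sum_{i=0}^n(-1)^ib(F_0,\dots,\widehat{F_i},\dots,F_n)$. *)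

theory Defs
  imports "HOL-Analysis.Analysis"
begin

text \<open>Vectors of R^n are modelled as real^'n with n = CARD('n); the standard basis
  e_1,...,e_n is given by a labelling idx : {1..n} -> 'n (a bijection).
  A complete flag V_0 < V_1 < ... < V_n is represented by the function k |-> V_k,
  extended canonically by V_k = R^n for k >= n.\<close>

definition complete_flags :: "(nat \<Rightarrow> (real^'n) set) set" where
  "complete_flags = {V. (\<forall>k. subspace (V k)) \<and> (\<forall>k. dim (V k) = min k CARD('n)) \<and>
                        (\<forall>k. V k \<subseteq> V (Suc k))}"

definition flag_of :: "(nat \<Rightarrow> real^'n) \<Rightarrow> nat \<Rightarrow> (real^'n) set" where
  "flag_of w k = span (w ` {1..min k CARD('n)})"

definition integral_matrix :: "real^'n^'n \<Rightarrow> bool" where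
  "integral_matrix g \<longleftrightarrow> (\<forall>i j. g $ i $ j \<in> \<int>)"

definition GL_Z :: "(real^'n^'n) set" where
  "GL_Z = {g. integral_matrix g \<and> (\<exists>h. integral_matrix h \<and> g ** h = mat 1 \<and> h ** g = mat 1)}"

definition flag_act :: "real^'n^'n \<Rightarrow> (nat \<Rightarrow> (real^'n) set) \<Rightarrow> nat \<Rightarrow> (real^'n) set" where
  "flag_act g V k = (\<lambda>x. g *v x) ` V k"

definition coboundary :: "('f list \<Rightarrow> real) \<Rightarrow> 'f list \<Rightarrow> real" where
  "coboundary b Fs = (\<Sum>i<length Fs. (-1) ^ i * b (take i Fs @ drop (Suc i) Fs))"

definition std_e :: "(nat \<Rightarrow> 'n) \<Rightarrow> nat \<Rightarrow> real^'n" where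
  "std_e idx i = (if i = 0 then (\<Sum>j\<in>{1..CARD('n)}. axis (idx j) 1) else axis (idx i) 1)"

text \<open>F_i = F(e_i, e_{i+1}, ..., e_n, e_0, ..., e_{i-1}) (indices cyclic mod n+1);
  for i = 0 this is F(e_0,...,e_{n-1}), for i = 1 it is F(e_1,...,e_n).\<close>
definition special_flag :: "(nat \<Rightarrow> 'n) \<Rightarrow> nat \<Rightarrow> nat \<Rightarrow> (real^'n) set" where
  "special_flag idx i = flag_of (\<lambda>j. std_e idx ((i + j - 1) mod (CARD('n) + 1)))"

end

theory Submission imports Defs "HOL-Number_Theory.Cong" begin

lemma det_one_row:
  fixes A :: "real^'n^'n"
  assumes ld: "\<And>i j. i \<noteq> r \<Longrightarrow> A$i$j = (if i = j then 1 else 0)"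
  shows "det A = A$r$r"
proof -
  let ?U = "UNIV:: 'n set"
  let ?PU = "{p. p permutes ?U}"
  let ?pp = "\<lambda>p. of_int (sign p) * prod (\<lambda>i. A$i$p i) (UNIV :: 'n set)"
  have fU: "finite ?U" by simp
  from finite_permutations[OF fU] have fPU: "finite ?PU" .
  have id0: "{id} \<subseteq> ?PU"
    by (auto simp: permutes_id)
  have p0: "\<forall>p \<in> ?PU - {id}. ?pp p = 0"
  proof
    fix p
    assume p: "p \<in> ?PU - {id}"
    then obtain i where i: "p i \<noteq> i"
      by fastforce
    have "\<exists>k. k \<noteq> r \<and> p k \<noteq> k"
    proof (cases "i = r")
      case True
      have pp: "p (p i) \<noteq> p i" using i p by (metis mem_Collect_eq DiffD1 permutes_inj injD)
      show ?thesis using True i pp by blast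
    next
      case False then show ?thesis using i by blast
    qed
    then obtain k where "k \<noteq> r" "p k \<noteq> k" by blast
    with ld have "\<exists>i \<in> ?U. A$i$p i = 0"
      by (metis UNIV_I)
    with prod_zero [OF fU] show "?pp p = 0"
      by force
  qed
  from sum.mono_neutral_cong_left[OF fPU id0 p0] have "det A = prod (\<lambda>i. A$i$i) ?U"
    unfolding det_def by (simp add: sign_id)
  also have "\<dots> = A$r$r * prod (\<lambda>i. A$i$i) (?U - {r})"
    by (simp add: prod.remove)
  also have "prod (\<lambda>i. A$i$i) (?U - {r}) = 1"
    using ld by (intro prod.neutral) auto
  finally show ?thesis by simp
qed

definition refl_mat :: "real^'n \<Rightarrow> real^'n \<Rightarrow> real^'n^'n" where
  "refl_mat u v = (\<chi> a b. (if a = b then 1 else 0) - 2 * v$a * u$b)"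

lemma refl_mat_apply: "refl_mat u v *v x = x - (2 * (u \<bullet> x)) *\<^sub>R v"
proof -
  have "(refl_mat u v *v x) $ a = x $ a - 2 * (u \<bullet> x) * v $ a" for a
  proof -
    have "(refl_mat u v *v x) $ a = (\<Sum>b\<in>UNIV. (if a = b then 1 else 0) * x$b - (2 * v$a) * (u$b * x$b))"
      by (simp add: refl_mat_def matrix_vector_mult_def left_diff_distrib mult.assoc)
    also have "\<dots> = x $ a - 2 * v$a * (u \<bullet> x)"
      by (simp add: sum_subtractf sum_distrib_left[symmetric] inner_vec_def if_distrib[of "\<lambda>c. c * _"] cong: if_cong)
    finally show ?thesis by simp
  qed
  then show ?thesis by (simp add: vec_eq_iff)
qed

lemma refl_mat_invol:
  assumes "u \<bullet> v = 1"
  shows "refl_mat u v ** refl_mat u v = mat 1"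
  unfolding matrix_eq
proof
  fix x
  have "u \<bullet> (refl_mat u v *v x) = - (u \<bullet> x)"
    by (simp add: refl_mat_apply inner_diff_right assms)
  then show "(refl_mat u v ** refl_mat u v) *v x = mat 1 *v x"
    by (simp add: matrix_vector_mul_assoc[symmetric] refl_mat_apply)
qed

lemma refl_mat_integral:
  assumes "\<And>a. u$a \<in> \<int>" "\<And>a. v$a \<in> \<int>"
  shows "integral_matrix (refl_mat u v)"
  using assms by (simp add: integral_matrix_def refl_mat_def)

lemma refl_mat_GL:
  assumes "u \<bullet> v = 1" "\<And>a. u$a \<in> \<int>" "\<And>a. v$a \<in> \<int>"
  shows "refl_mat u v \<in> GL_Z"
  using assms refl_mat_invol refl_mat_integral unfolding GL_Z_def by blast

lemma refl_mat_det_v: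
  assumes "u \<bullet> v = 1" "v = axis r 1"
  shows "det (refl_mat u v) = -1"
proof -
  have "det (refl_mat u v) = refl_mat u v $ r $ r"
    by (rule det_one_row) (simp add: refl_mat_def assms axis_def)
  also have "\<dots> = 1 - 2 * (u \<bullet> v)" using assms by (simp add: refl_mat_def inner_axis)
  finally show ?thesis using assms by simp
qed

lemma refl_mat_det_u:
  assumes "u \<bullet> v = 1" "u = axis r 1"
  shows "det (refl_mat u v) = -1"
proof -
  have "det (refl_mat u v) = det (transpose (refl_mat u v))" by simp
  also have "\<dots> = transpose (refl_mat u v) $ r $ r"
    by (rule det_one_row) (simp add: refl_mat_def assms axis_def transpose_def)
  also have "\<dots> = 1 - 2 * (u \<bullet> v)" using assms by (simp add: refl_mat_def inner_axis' transpose_def)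
  finally show ?thesis using assms by simp
qed

lemma refl_span_inv:
  assumes "u \<bullet> v = 1" "\<And>w. w \<in> W \<Longrightarrow> refl_mat u v *v w \<in> span W"
  shows "(\<lambda>x. refl_mat u v *v x) ` span W = span W"
proof -
  let ?g = "\<lambda>x. refl_mat u v *v x"
  have lin: "linear ?g" by simp
  have sub: "?g ` span W \<subseteq> span W"
    unfolding span_linear_image[OF lin, symmetric]
    by (rule span_minimal) (use assms(2) in auto)
  have gg: "?g (?g x) = x" for x
    by (simp add: matrix_vector_mul_assoc refl_mat_invol[OF assms(1)])
  have "span W = ?g ` ?g ` span W" by (simp add: image_image gg)
  also have "\<dots> \<subseteq> ?g ` span W" using sub by blast
  finally show ?thesis using sub by blast
qed

locale flagctx =
  fixes idx :: "nat \<Rightarrow> 'n::finite"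
  assumes bij: "bij_betw idx {1..CARD('n)} (UNIV :: 'n set)"
    and two: "CARD('n) \<ge> 2"
begin

abbreviation "s \<equiv> std_e idx"

lemma idx_inj: "a \<in> {1..CARD('n)} \<Longrightarrow> b \<in> {1..CARD('n)} \<Longrightarrow> idx a = idx b \<longleftrightarrow> a = b"
  using bij unfolding bij_betw_def inj_on_def by blast

lemma ax_inner:
  assumes "a \<in> {1..CARD('n)}" "m \<le> CARD('n)"
  shows "axis (idx a) 1 \<bullet> s m = (if m = 0 \<or> m = a then 1 else 0)"
proof (cases "m = 0")
  case True
  have "axis (idx a) 1 \<bullet> s m = (\<Sum>j\<in>{1..CARD('n)}. (if idx a = idx j then 1 else 0))"
    using True by (simp add: std_e_def inner_sum_right inner_axis_axis if_distrib cong: if_cong)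
  also have "\<dots> = (\<Sum>j\<in>{1..CARD('n)}. (if a = j then 1 else 0))"
    by (rule sum.cong) (use idx_inj assms in auto)
  also have "\<dots> = 1" using assms by simp
  finally show ?thesis using True by simp
next
  case False
  then show ?thesis using assms idx_inj[of a m] by (simp add: std_e_def inner_axis_axis)
qed

lemma s_int: "s m $ a \<in> \<int>"
  by (auto simp: std_e_def axis_def intro!: Ints_sum)

lemma s_inj:
  assumes "a \<le> CARD('n)" "b \<le> CARD('n)" "s a = s b"
  shows "a = b"
proof (rule ccontr)
  assume ne: "a \<noteq> b"
  have key: "x = 0" if "x \<le> CARD('n)" "y \<le> CARD('n)" "y \<ge> 1" "s x = s y" "x \<noteq> y" for x y
    using ax_inner[of y x] ax_inner[of y y] that by (auto split: if_splits)
  have "a = 0 \<or> b = 0" using key[of a b] key[of b a] assms ne by (cases "a = 0") auto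
  then obtain y where y: "y \<ge> 1" "y \<le> CARD('n)" "s 0 = s y"
    using assms ne by (metis le_less_Suc_eq less_one not_le)
  define c where "c = (if y = 1 then 2 else 1::nat)"
  have c: "c \<in> {1..CARD('n)}" "c \<noteq> y" using two by (auto simp: c_def)
  show False using ax_inner[of c 0] ax_inner[of c y] c y by auto
qed

lemma mod_img:
  assumes "j \<le> CARD('n)"
  shows "(\<lambda>t. (j + t - 1) mod (CARD('n) + 1)) ` {1..CARD('n)} = {..CARD('n)} - {(j + CARD('n)) mod (CARD('n)+1)}"
    and "inj_on (\<lambda>t. (j + t - 1) mod (CARD('n) + 1)) {1..CARD('n)}"
proof -
  let ?r = "\<lambda>t. (j + t - 1) mod (CARD('n) + 1)"
  have inj: "inj_on ?r {1..CARD('n)+1}"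
  proof
    fix x y assume xy: "x \<in> {1..CARD('n)+1}" "y \<in> {1..CARD('n)+1}" "?r x = ?r y"
    then have "[j + (x - 1) = j + (y - 1)] (mod CARD('n)+1)" by (simp add: cong_def)
    then have "[x - 1 = y - 1] (mod CARD('n)+1)" by (simp only: cong_add_lcancel_nat)
    moreover have "x - 1 < CARD('n) + 1" "y - 1 < CARD('n) + 1" using xy by auto
    ultimately show "x = y" using xy unfolding cong_def by (simp only: mod_less) auto
  qed
  have "?r ` {1..CARD('n)+1} \<subseteq> {..CARD('n)}" by auto
  moreover have "card (?r ` {1..CARD('n)+1}) = card {..CARD('n)}" using card_image[OF inj] by simp
  ultimately have full: "?r ` {1..CARD('n)+1} = {..CARD('n)}" by (intro card_subset_eq) auto
  have e: "{1..CARD('n)} = {1..CARD('n)+1} - {CARD('n)+1}" by auto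
  show "?r ` {1..CARD('n)} = {..CARD('n)} - {(j + CARD('n)) mod (CARD('n)+1)}"
  proof -
    have "?r ` {1..CARD('n)} = ?r ` ({1..CARD('n)+1} - {CARD('n)+1})" using e by simp
    also have "\<dots> = ?r ` {1..CARD('n)+1} - ?r ` {CARD('n)+1}"
      by (rule inj_on_image_set_diff[OF inj]) auto
    finally show ?thesis unfolding full by simp
  qed
  show "inj_on ?r {1..CARD('n)}" using inj by (rule inj_on_subset) auto
qed

lemma flag_complete:
  assumes j: "j \<le> CARD('n)"
  shows "special_flag idx j \<in> complete_flags"
proof -
  define w where "w = (\<lambda>t. s ((j + t - 1) mod (CARD('n) + 1)))"
  define q where "q = (j + CARD('n)) mod (CARD('n) + 1)"
  have q: "q \<le> CARD('n)" unfolding q_def by (simp add: less_Suc_eq_le)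
  have W: "w ` {1..CARD('n)} = s ` ({..CARD('n)} - {q})"
    unfolding w_def q_def using mod_img(1)[OF j] by (metis image_image)
  have sinj: "inj_on s {..CARD('n)}" using s_inj by (auto intro: inj_onI)
  have winj: "inj_on w {1..CARD('n)}"
    unfolding w_def using comp_inj_on[OF mod_img(2)[OF j], of s] sinj mod_img(1)[OF j]
    by (simp add: o_def inj_on_subset)
  have sp: "span (w ` {1..CARD('n)}) = UNIV"
  proof -
    have "b \<in> span (w ` {1..CARD('n)})" if bB: "b \<in> Basis" for b
    proof -
      obtain k where k: "b = axis k 1" using bB by (auto simp: Basis_vec_def)
      obtain a where a: "a \<in> {1..CARD('n)}" "k = idx a" using bij unfolding bij_betw_def by (metis UNIV_I imageE)
      have sa: "s a = b" using a k by (simp add: std_e_def)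
      show ?thesis
      proof (cases "a = q")
        case False
        then have "s a \<in> w ` {1..CARD('n)}" unfolding W using a by auto
        then show ?thesis unfolding sa[symmetric] by (rule span_base)
      next
        case True
        have "s 0 = (\<Sum>m\<in>{1..CARD('n)}. s m)" by (simp add: std_e_def)
        also have "\<dots> = s a + (\<Sum>m\<in>{1..CARD('n)} - {a}. s m)"
          using a by (simp add: sum.remove)
        finally have eq: "s a = s 0 - (\<Sum>m\<in>{1..CARD('n)} - {a}. s m)" by simp
        have "s 0 \<in> w ` {1..CARD('n)}" unfolding W using True a by auto
        moreover have "s m \<in> w ` {1..CARD('n)}" if "m \<in> {1..CARD('n)} - {a}" for m
          unfolding W using True that by auto
        ultimately have "s a \<in> span (w ` {1..CARD('n)})"
          unfolding eq by (intro span_diff span_sum) (auto intro: span_base)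
        then show ?thesis using sa by simp
      qed
    qed
    then have "span Basis \<subseteq> span (w ` {1..CARD('n)})" by (intro span_minimal) auto
    then show ?thesis by auto
  qed
  have cardw: "card (w ` {1..m}) = m" if "m \<le> CARD('n)" for m
    using card_image[OF inj_on_subset[OF winj, of "{1..m}"]] that by auto
  have ind: "independent (w ` {1..CARD('n)})"
    proof (rule card_le_dim_spanning[of _ UNIV])
    show "finite (w ` {1..CARD('n)})" by simp
    show "UNIV \<subseteq> span (w ` {1..CARD('n)})" using sp by simp
    show "card (w ` {1..CARD('n)}) \<le> dim (UNIV :: (real^'n) set)" using cardw[of "CARD('n)"] by simp
  qed simp
  have F: "special_flag idx j = flag_of w" unfolding special_flag_def w_def ..
  show ?thesis unfolding F complete_flags_def flag_of_def
  proof (intro CollectI conjI allI)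
    fix k
    show "subspace (span (w ` {1..min k CARD('n)}))" by simp
    have indk: "independent (w ` {1..min k CARD('n)})"
      by (rule independent_mono[OF ind]) auto
    then show "dim (span (w ` {1..min k CARD('n)})) = min k CARD('n)"
      by (simp only: dim_span_eq_card_independent[OF indk] cardw[OF min.cobounded2])
    show "span (w ` {1..min k CARD('n)}) \<subseteq> span (w ` {1..min (Suc k) CARD('n)})"
      by (intro span_mono image_mono) auto
  qed
qed

lemma flag_inv:
  assumes i: "i \<le> CARD('n)" and j: "j \<le> CARD('n)" and ji: "j \<noteq> i"
    and p: "p = (i + CARD('n)) mod (CARD('n) + 1)"
    and up: "u \<bullet> s p = 1"
    and u0: "\<And>m. m \<le> CARD('n) \<Longrightarrow> m \<noteq> p \<Longrightarrow> m \<noteq> i \<Longrightarrow> u \<bullet> s m = 0"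
  shows "flag_act (refl_mat u (s p)) (special_flag idx j) = special_flag idx j"
proof
  fix k
  define w where "w = (\<lambda>t. s ((j + t - 1) mod (CARD('n) + 1)))"
  let ?W = "w ` {1..min k CARD('n)}"
  have "(\<lambda>x. refl_mat u (s p) *v x) ` span ?W = span ?W"
  proof (rule refl_span_inv[OF up])
    fix x assume "x \<in> ?W"
    then obtain t where t: "t \<in> {1..min k CARD('n)}" "x = w t" by auto
    define m where "m = (j + t - 1) mod (CARD('n) + 1)"
    have xm: "x = s m" using t by (simp add: w_def m_def)
    have xin: "x \<in> span ?W" unfolding t(2) by (rule span_base) (use t(1) in blast)
    have vin: "s p \<in> span ?W" if "m = p \<or> m = i"
    proof (cases "m = p")
      case True then show ?thesis using xin xm by simp
    next
      case False
      then have mi: "m = i" using that by simp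
      have t1: "t \<noteq> 1" using mi j ji by (auto simp: m_def)
      then have t2: "t - 1 \<in> {1..min k CARD('n)}" using t by auto
      have "(j + (t - 1) - 1) mod (CARD('n) + 1) = ((j + t - 1) + CARD('n)) mod (CARD('n) + 1)"
      proof -
        have eq: "j + t - 1 + CARD('n) = (j + (t - 1) - 1) + (CARD('n) + 1)" using t t1 by auto
        show ?thesis by (simp only: eq mod_add_self2)
      qed
      also have "\<dots> = p" unfolding p mi[unfolded m_def, symmetric] by (simp add: mod_add_left_eq)
      finally have "w (t - 1) = s p" by (simp add: w_def)
      then show ?thesis by (metis t2 imageI span_base)
    qed
    have mle: "m \<le> CARD('n)" by (simp add: m_def less_Suc_eq_le)
    show "refl_mat u (s p) *v x \<in> span ?W"
    proof (cases "m = p \<or> m = i")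
      case True
      then show ?thesis unfolding refl_mat_apply using xin vin
        by (intro span_diff span_scale) auto
    next
      case False
      then show ?thesis using u0[OF mle] xm xin by (simp add: refl_mat_apply)
    qed
  qed
  then show "flag_act (refl_mat u (s p)) (special_flag idx j) k = special_flag idx j k"
    by (simp add: flag_act_def special_flag_def flag_of_def w_def)
qed

lemma axis_int: "axis r (1::real) $ a \<in> \<int>"
  by (simp add: axis_def)

lemma exists_u:
  assumes i: "i \<le> CARD('n)"
  defines "p \<equiv> (i + CARD('n)) mod (CARD('n) + 1)"
  shows "\<exists>u. u \<bullet> s p = 1 \<and> (\<forall>m. m \<le> CARD('n) \<longrightarrow> m \<noteq> p \<longrightarrow> m \<noteq> i \<longrightarrow> u \<bullet> s m = 0)
      \<and> (\<forall>a. u$a \<in> \<int>) \<and> (\<exists>r. u = axis r 1 \<or> s p = axis r 1)"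
proof -
  have n1: "1 \<in> {1..CARD('n)}" "CARD('n) \<in> {1..CARD('n)}" using two by auto
  consider "i = 0" | "i = 1" | "i \<ge> 2" by linarith
  then show ?thesis
  proof cases
    case 1
    then have pn: "p = CARD('n)" by (simp add: p_def)
    show ?thesis
      by (rule exI[of _ "axis (idx CARD('n)) 1"])
        (use n1 1 pn in \<open>auto simp: ax_inner axis_int\<close>)
  next
    case 2
    then have pn: "p = 0" by (simp add: p_def)
    show ?thesis
      by (rule exI[of _ "axis (idx 1) 1"])
        (use n1 2 pn in \<open>auto simp: ax_inner axis_int\<close>)
  next
    case 3
    have "i + CARD('n) = (i - 1) + (CARD('n) + 1)" using 3 by auto
    then have pn: "p = i - 1" using i 3 unfolding p_def by (simp only: mod_add_self2) simp
    have ii: "i \<in> {1..CARD('n)}" "i - 1 \<in> {1..CARD('n)}" using 3 i by auto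
    have sp: "s p = axis (idx (i - 1)) 1" using pn 3 by (simp add: std_e_def)
    have h1: "axis (idx i) 1 \<bullet> axis (idx (i - 1)) (1::real) = 0"
      using idx_inj[OF ii] 3 by (simp add: inner_axis_axis)
    have h2: "axis (idx (i-1)) 1 \<bullet> axis (idx (i - 1)) (1::real) = 1"
      by (simp add: inner_axis_axis)
    show ?thesis
      by (rule exI[of _ "axis (idx (i - 1)) 1 - axis (idx i) 1"])
        (use ii 3 pn sp h1 h2 in \<open>auto simp: ax_inner axis_int inner_diff_left\<close>)
  qed
qed

end


theorem lemma5p1:
  fixes idx :: "nat \<Rightarrow> 'n::finite"
    and b :: "(nat \<Rightarrow> (real^'n) set) list \<Rightarrow> real"
  assumes "even CARD('n)"
    and "bij_betw idx {1..CARD('n)} (UNIV :: 'n set)"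
    and "\<And>g Fs. g \<in> GL_Z \<Longrightarrow> length Fs = CARD('n) \<Longrightarrow> set Fs \<subseteq> complete_flags \<Longrightarrow>
           b (map (flag_act g) Fs) = sgn (det g) * b Fs"
  shows "coboundary b (map (special_flag idx) [0..<CARD('n) + 1]) = 0"
proof -
  have c0: "CARD('n) \<noteq> 0" by simp
  have two: "CARD('n) \<ge> 2"
  proof (rule ccontr)
    assume "\<not> CARD('n) \<ge> 2"
    then have "CARD('n) = 1" using c0 by linarith
    then show False using assms(1) by simp
  qed
  interpret flagctx idx using assms(2) two by unfold_locales
  let ?L = "map (special_flag idx) [0..<CARD('n) + 1]"
  have zero: "b (take i ?L @ drop (Suc i) ?L) = 0" if iN: "i < CARD('n) + 1" for i
  proof -
    have i: "i \<le> CARD('n)" using iN by simp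
    define p where "p = (i + CARD('n)) mod (CARD('n) + 1)"
    obtain u where up: "u \<bullet> s p = 1"
      and u0: "\<And>m. m \<le> CARD('n) \<Longrightarrow> m \<noteq> p \<Longrightarrow> m \<noteq> i \<Longrightarrow> u \<bullet> s m = 0"
      and ui: "\<And>a. u$a \<in> \<int>" and ax: "\<exists>r. u = axis r 1 \<or> s p = axis r 1"
      using exists_u[OF i] unfolding p_def by blast
    define g where "g = refl_mat u (s p)"
    have gGL: "g \<in> GL_Z" unfolding g_def by (rule refl_mat_GL[OF up ui s_int])
    have dg: "det g = -1"
      using ax refl_mat_det_u[OF up] refl_mat_det_v[OF up] unfolding g_def by blast
    define Fs where "Fs = take i ?L @ drop (Suc i) ?L"
    have Fs: "Fs = map (special_flag idx) ([0..<i] @ [Suc i..<CARD('n) + 1])"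
      unfolding Fs_def using iN by (simp add: take_map drop_map)
    have len: "length Fs = CARD('n)" using iN by (simp add: Fs)
    have setFs: "set Fs \<subseteq> complete_flags"
      unfolding Fs using iN by (auto intro!: flag_complete)
    have mapFs: "map (flag_act g) Fs = Fs"
    proof (rule map_idI)
      fix x assume "x \<in> set Fs"
      then obtain j where jj: "j \<in> set ([0..<i] @ [Suc i..<CARD('n) + 1])" "x = special_flag idx j"
        unfolding Fs set_map by blast
      then have j: "j \<le> CARD('n)" "j \<noteq> i" "x = special_flag idx j" using i by auto
      show "flag_act g x = x"
        unfolding g_def j(3) by (rule flag_inv[OF i j(1) j(2) p_def up u0])
    qed
    have "b Fs = - b Fs" using assms(3)[OF gGL len setFs] mapFs dg by simp
    then show ?thesis unfolding Fs_def by simp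
  qed
  show ?thesis unfolding coboundary_def
    by (rule sum.neutral) (use zero in simp)
qed

end
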